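(* Let $k\ge1$ and let $x,y$ be integer sequences of length $k$ with identical second-order cyclic statistics, i.e. $S_{i_1,i_2}(x)=S_{i_1,i_2}(y)$ for all indices $i_1,i_2$. Then for each $\alpha\in[k]$, either (1) $\hat{x}_j\neq 0$ and $\hat{y}_j\neq 0$ for all $j\in G_\alpha$, or (2) $\hat{x}_j=\hat{y}_j=0$ for all $j\in G_\alpha$.
   Context: Sequences are indexed modulo $k$. The cyclic statistic is $S_{i_1,\dots,i_m}(x)=\sum_{j=1}^{k} x_{i_1+j}\cdots x_{i_m+j}$ (indices mod $k$). The Fourier transform is $\hat{x}_j=\sum_{\ell=0}^{k-1}x_\ell e^{2\pi i j\ell/k}$ (indices mod $k$). $[k]=\{1,\dots,k\}$ and $G_\alpha=\{j\in[k]:\gcd(j,k)=\alpha\}$. *)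

theory Defs
  imports "HOL-Analysis.Analysis"
begin

text \<open>A length-k sequence is a function nat => int, read modulo k (only x (i mod k) is used).\<close>

definition cyc_stat2 :: "nat \<Rightarrow> (nat \<Rightarrow> int) \<Rightarrow> nat \<Rightarrow> nat \<Rightarrow> int" where
  "cyc_stat2 k x i1 i2 = (\<Sum>j=1..k. x ((i1 + j) mod k) * x ((i2 + j) mod k))"

definition dft :: "nat \<Rightarrow> (nat \<Rightarrow> int) \<Rightarrow> nat \<Rightarrow> complex" where
  "dft k x j = (\<Sum>l<k. of_int (x l) * exp (2 * of_real pi * \<i> * of_nat (j * l) / of_nat k))"

definition G_set :: "nat \<Rightarrow> nat \<Rightarrow> nat set" where
  "G_set k \<alpha> = {j \<in> {1..k}. gcd j k = \<alpha>}"

end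

theory Submission
  imports Defs "HOL-Computational_Algebra.Polynomial_Factorial" "HOL-Computational_Algebra.Primes"
begin

definition cg :: "nat \<Rightarrow> 'a::comm_ring_1 \<Rightarrow> 'a \<Rightarrow> bool" where
  "cg p a b \<longleftrightarrow> (\<exists>d. a = b + of_nat p * d)"

lemma cg_refl[simp]: "cg p a a"
  unfolding cg_def by (rule exI[of _ 0]) simp

lemma cg_sym: "cg p a b \<Longrightarrow> cg p b a"
proof -
  assume "cg p a b"
  then obtain d where "a = b + of_nat p * d" unfolding cg_def by blast
  then have "b = a + of_nat p * (- d)" by simp
  then show ?thesis unfolding cg_def by blast
qed

lemma cg_trans: "cg p a b \<Longrightarrow> cg p b c \<Longrightarrow> cg p a c"
proof -
  assume "cg p a b" "cg p b c"
  then obtain d1 d2 where "a = b + of_nat p * d1" "b = c + of_nat p * d2" unfolding cg_def by blast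
  then have "a = c + of_nat p * (d1 + d2)" by (simp add: algebra_simps)
  then show ?thesis unfolding cg_def by blast
qed

lemma cg_add: "cg p a b \<Longrightarrow> cg p c e \<Longrightarrow> cg p (a + c) (b + e)"
proof -
  assume "cg p a b" "cg p c e"
  then obtain d1 d2 where "a = b + of_nat p * d1" "c = e + of_nat p * d2" unfolding cg_def by blast
  then have "a + c = (b + e) + of_nat p * (d1 + d2)" by (simp add: algebra_simps)
  then show ?thesis unfolding cg_def by blast
qed

lemma cg_mult: "cg p a b \<Longrightarrow> cg p c e \<Longrightarrow> cg p (a * c) (b * e)"
proof -
  assume "cg p a b" "cg p c e"
  then obtain d1 d2 where "a = b + of_nat p * d1" "c = e + of_nat p * d2" unfolding cg_def by blast
  then have "a * c = b * e + of_nat p * (b * d2 + d1 * e + of_nat p * d1 * d2)"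
    by (simp add: algebra_simps)
  then show ?thesis unfolding cg_def by blast
qed

lemma cg_power: "cg p a b \<Longrightarrow> cg p (a ^ n) (b ^ n)"
  by (induction n) (auto intro: cg_mult)

lemma binom_frob:
  fixes u v :: "'a::comm_ring_1"
  assumes "prime p"
  shows "cg p ((u + v) ^ p) (u ^ p + v ^ p)"
proof -
  have p2: "p \<ge> 2" using assms prime_ge_2_nat by blast
  have "(u + v) ^ p = (\<Sum>k\<le>p. of_nat (p choose k) * u ^ k * v ^ (p - k))"
    by (rule binomial_ring)
  also have "{..p} = insert 0 (insert p {1..<p})" using p2 by auto
  also have "(\<Sum>k\<in>insert 0 (insert p {1..<p}). of_nat (p choose k) * u ^ k * v ^ (p - k))
      = v ^ p + (u ^ p + (\<Sum>k\<in>{1..<p}. of_nat (p choose k) * u ^ k * v ^ (p - k)))"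
    using p2 by (simp add: sum.insert)
  also have "(\<Sum>k\<in>{1..<p}. of_nat (p choose k) * u ^ k * v ^ (p - k))
      = of_nat p * (\<Sum>k\<in>{1..<p}. of_nat ((p choose k) div p) * u ^ k * v ^ (p - k))"
    unfolding sum_distrib_left
  proof (rule sum.cong)
    fix k assume k: "k \<in> {1..<p}"
    have "p dvd p choose k" using k assms by (intro dvd_choose_prime) auto
    then have "p choose k = p * ((p choose k) div p)" by simp
    then have "(of_nat (p choose k) :: 'a) = of_nat p * of_nat ((p choose k) div p)"
      by (metis of_nat_mult)
    then show "of_nat (p choose k) * u ^ k * v ^ (p - k) =
          of_nat p * (of_nat ((p choose k) div p) * u ^ k * v ^ (p - k))"
      by (simp add: mult.assoc)
  qed simp
  finally have e: "(u + v) ^ p = v ^ p + (u ^ p + of_nat p * (\<Sum>k\<in>{1..<p}. of_nat ((p choose k) div p) * u ^ k * v ^ (p - k)))" .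
  show ?thesis unfolding cg_def
    by (rule exI[of _ "\<Sum>k\<in>{1..<p}. of_nat ((p choose k) div p) * u ^ k * v ^ (p - k)"]) (simp only: e add_ac)
qed

lemma pow_split:
  fixes u v :: "'a::comm_ring_1"
  shows "\<exists>e. (u + v) ^ n = u * e + v ^ n"
proof (induction n)
  case 0 then show ?case by (auto intro: exI[of _ 0])
next
  case (Suc n)
  then obtain e where "(u + v) ^ n = u * e + v ^ n" by blast
  then have "(u + v) ^ Suc n = u * ((u + v) * e + v ^ n) + v ^ Suc n"
    by (simp add: algebra_simps)
  then show ?case by blast
qed

lemma int_frob_nat:
  assumes "prime p"
  shows "cg p ((int n) ^ p) (int n)"
proof (induction n)
  case 0 then show ?case using assms prime_gt_0_nat by (simp add: power_0_left)
next
  case (Suc n)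
  have "cg p ((int n + 1) ^ p) (int n ^ p + 1 ^ p)" by (rule binom_frob[OF assms])
  moreover have "cg p (int n ^ p + 1 ^ p) (int n + 1)" using Suc cg_add[OF Suc cg_refl[of p 1]] by simp
  ultimately have "cg p ((int n + 1) ^ p) (int n + 1)" by (rule cg_trans)
  moreover have "int (Suc n) = int n + 1" by simp
  ultimately show ?case by (simp only:)
qed

lemma int_frob:
  assumes "prime p"
  shows "cg p (a ^ p) (a::int)"
proof -
  define M where "M = nat \<bar>a\<bar>"
  have nn: "a + int p * int M \<ge> 0"
  proof -
    have "int p \<ge> 1" using prime_gt_0_nat[OF assms] by simp
    then have "int p * \<bar>a\<bar> \<ge> 1 * \<bar>a\<bar>" by (intro mult_right_mono) auto
    then show ?thesis unfolding M_def by simp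
  qed
  have c1: "cg p (a + int p * int M) a" unfolding cg_def by (rule exI[of _ "int M"]) simp
  have "cg p ((a + int p * int M) ^ p) (a + int p * int M)"
  proof -
    have "int (nat (a + int p * int M)) = a + int p * int M" using nn by simp
    then show ?thesis using int_frob_nat[OF assms, of "nat (a + int p * int M)"] by (simp only:)
  qed
  moreover have "cg p (a ^ p) ((a + int p * int M) ^ p)" using cg_sym[OF cg_power[OF c1]] .
  ultimately have "cg p (a ^ p) (a + int p * int M)" by (rule cg_trans[rotated])
  then show ?thesis using c1 by (rule cg_trans)
qed

lemma pCons_as_monom: "pCons (a::'a::comm_ring_1) g = [:a:] + monom 1 1 * g"
  by (rule poly_eqI) (simp add: coeff_monom_mult coeff_pCons split: nat.split)

lemma cg_const:
  fixes a b :: int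
  assumes "cg p a b" shows "cg p [:a:] [:b:]"
proof -
  obtain d where "a = b + of_nat p * d" using assms unfolding cg_def by blast
  then have "[:a:] = [:b:] + of_nat p * [:d:]" by (simp add: of_nat_poly)
  then show ?thesis unfolding cg_def by blast
qed

lemma poly_frob:
  fixes g :: "int poly"
  assumes p: "prime p"
  shows "cg p (g \<circ>\<^sub>p monom 1 p) (g ^ p)"
proof (induction g rule: pCons_induct)
  case 0
  have "p > 0" using p prime_gt_0_nat by blast
  then show ?case by (simp add: power_0_left)
next
  case (pCons a g)
  have l: "pCons a g \<circ>\<^sub>p monom 1 p = [:a:] + monom 1 p * (g \<circ>\<^sub>p monom 1 p)"
    by (simp add: pcompose_pCons)
  have "cg p ((pCons a g) ^ p) ([:a:] ^ p + (monom 1 1 * g) ^ p)"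
    unfolding pCons_as_monom[of a g] by (rule binom_frob[OF p])
  moreover have "([:a:] ^ p + (monom 1 1 * g) ^ p) = [:a ^ p:] + monom 1 p * g ^ p"
    by (simp add: poly_const_pow power_mult_distrib monom_power)
  moreover have "cg p ([:a ^ p:] + monom 1 p * g ^ p) ([:a:] + monom 1 p * (g \<circ>\<^sub>p monom 1 p))"
    by (intro cg_add cg_mult cg_const int_frob[OF p] cg_refl cg_sym[OF pCons.IH])
  ultimately have "cg p ((pCons a g) ^ p) (pCons a g \<circ>\<^sub>p monom 1 p)"
    unfolding l by (metis cg_trans)
  then show ?case by (rule cg_sym)
qed

lemma deriv_ident:
  fixes f g :: "int poly"
  assumes fg: "f * g = monom 1 m - 1" and m: "m \<ge> 1"
  shows "[:int m:] = f * (monom 1 1 * pderiv g - smult (int m) g) + g * (monom 1 1 * pderiv f)"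
proof -
  have "pderiv (f * g) = monom (int m) (m - 1)"
    unfolding fg by (simp add: pderiv_diff pderiv_monom pderiv_1)
  then have d: "f * pderiv g + g * pderiv f = monom (int m) (m - 1)" by (simp add: pderiv_mult)
  have "monom 1 1 * monom (int m) (m - 1) = (monom (int m) m :: int poly)"
    using m by (simp add: mult_monom)
  also have "monom (int m) m = smult (int m) (monom 1 m)" by (simp add: smult_monom)
  also have "monom 1 m = f * g + 1" using fg by simp
  finally have e: "monom 1 1 * (f * pderiv g + g * pderiv f) = smult (int m) (f * g) + [:int m:]"
    using d by (simp add: smult_add_right one_pCons)
  show ?thesis using e by (simp add: algebra_simps)
qed

lemma no_unit_mod_p:
  fixes f C D :: "int poly"
  assumes p: "prime p" and deg: "degree f \<ge> 1" and lc: "\<not> int p dvd lead_coeff f"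
    and c: "\<not> int p dvd c" and eq: "[:c:] = f * C + of_nat p * D"
  shows False
proof -
  have pp: "prime (int p)" using p by simp
  have cD: "coeff (of_nat p * D) n = int p * coeff D n" for n by (simp add: of_nat_poly)
  have ceq: "coeff [:c:] n = coeff (f * C) n + int p * coeff D n" for n
    using arg_cong[OF eq, of "\<lambda>q. coeff q n"] by (simp add: cD)
  show False
  proof (cases "\<forall>i. int p dvd coeff C i")
    case True
    have "c = coeff f 0 * coeff C 0 + int p * coeff D 0" using ceq[of 0] by (simp add: coeff_mult_0)
    then have "int p dvd c" using True by simp
    then show False using c by simp
  next
    case False
    define I where "I = {i. \<not> int p dvd coeff C i}"
    have Isub: "I \<subseteq> {..degree C}"
    proof
      fix i assume "i \<in> I"
      then have "coeff C i \<noteq> 0" unfolding I_def by auto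
      then show "i \<in> {..degree C}" using le_degree by auto
    qed
    have finI: "finite I" using Isub finite_subset by blast
    have Ine: "I \<noteq> {}" using False unfolding I_def by auto
    define i where "i = Max I"
    have iI: "i \<in> I" unfolding i_def using finI Ine by (rule Max_in)
    have above: "int p dvd coeff C j" if "j > i" for j
    proof (rule ccontr)
      assume "\<not> int p dvd coeff C j"
      then have "j \<in> I" unfolding I_def by simp
      then have "j \<le> i" unfolding i_def using finI by simp
      then show False using that by simp
    qed
    define d where "d = degree f"
    define n where "n = d + i"
    have n1: "n \<ge> 1" using deg unfolding n_def d_def by simp
    have "coeff [:c:] n = 0" using n1 by (cases n) auto
    then have s0: "coeff (f * C) n = - (int p * coeff D n)" using ceq[of n] by simp
    have sum: "coeff (f * C) n = (\<Sum>a\<le>n. coeff f a * coeff C (n - a))" by (rule coeff_mult)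
    have dn: "d \<in> {..n}" unfolding n_def by simp
    have split: "(\<Sum>a\<le>n. coeff f a * coeff C (n - a)) =
        coeff f d * coeff C (n - d) + (\<Sum>a\<in>{..n} - {d}. coeff f a * coeff C (n - a))"
      using dn by (subst sum.remove[of _ d]) auto
    have rest: "int p dvd (\<Sum>a\<in>{..n} - {d}. coeff f a * coeff C (n - a))"
    proof (rule dvd_sum)
      fix a assume a: "a \<in> {..n} - {d}"
      show "int p dvd coeff f a * coeff C (n - a)"
      proof (cases "a > d")
        case True
        then have "coeff f a = 0" unfolding d_def by (simp add: coeff_eq_0)
        then show ?thesis by simp
      next
        case False
        then have "a < d" using a by auto
        then have "n - a > i" unfolding n_def by simp
        then show ?thesis using above by simp
      qed
    qed
    have "int p dvd coeff f d * coeff C (n - d)"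
    proof -
      have "int p dvd coeff (f * C) n" using s0 by simp
      then have "int p dvd coeff f d * coeff C (n - d) + (\<Sum>a\<in>{..n} - {d}. coeff f a * coeff C (n - a))"
        using sum split by simp
      then show ?thesis using rest by (simp add: dvd_add_left_iff)
    qed
    moreover have "n - d = i" unfolding n_def by simp
    ultimately have "int p dvd lead_coeff f * coeff C i" unfolding d_def by simp
    then have "int p dvd lead_coeff f \<or> int p dvd coeff C i" using pp by (simp add: prime_dvd_mult_iff)
    then show False using lc iI unfolding I_def by auto
  qed
qed

definition ev :: "int poly \<Rightarrow> complex \<Rightarrow> complex" where
  "ev q z = poly (map_poly of_int q) z"

lemma ev_pCons: "ev (pCons a q) z = of_int a + z * ev q z"
  unfolding ev_def by (simp add: map_poly_pCons)

lemma ev_0[simp]: "ev 0 z = 0" unfolding ev_def by simp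

lemma ev_const[simp]: "ev [:a:] z = of_int a"
  by (simp add: ev_pCons)

lemma ev_add: "ev (p + q) z = ev p z + ev q z"
proof -
  have "map_poly (of_int :: int \<Rightarrow> complex) (p + q) = map_poly of_int p + map_poly of_int q"
    by (rule poly_eqI) (simp add: coeff_map_poly)
  then show ?thesis unfolding ev_def by simp
qed

lemma ev_smult: "ev (smult c q) z = of_int c * ev q z"
  unfolding ev_def by (simp add: map_poly_smult)

lemma ev_mult: "ev (p * q) z = ev p z * ev q z"
proof (induction p rule: pCons_induct)
  case 0 then show ?case by simp
next
  case (pCons a p)
  have "ev (pCons a p * q) z = ev (smult a q + pCons 0 (p * q)) z" by simp
  also have "\<dots> = of_int a * ev q z + z * ev (p * q) z" by (simp add: ev_add ev_smult ev_pCons)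
  finally show ?case using pCons.IH by (simp add: ev_pCons algebra_simps)
qed

lemma ev_uminus: "ev (- p) z = - ev p z"
proof -
  have "ev (smult (-1) p) z = - ev p z" by (simp only: ev_smult) simp
  moreover have "smult (-1) p = - p" by simp
  ultimately show ?thesis by simp
qed

lemma ev_diff: "ev (p - q) z = ev p z - ev q z"
  using ev_add[of p "- q" z] ev_uminus[of q z] by simp

lemma ev_power: "ev (p ^ n) z = ev p z ^ n"
  by (induction n) (simp_all add: ev_mult one_pCons)

lemma ev_monom: "ev (monom c n) z = of_int c * z ^ n"
  unfolding ev_def by (simp add: map_poly_monom poly_monom)

lemma ev_pcompose: "ev (g \<circ>\<^sub>p q) z = ev g (ev q z)"
proof (induction g rule: pCons_induct)
  case 0 then show ?case by simp
next
  case (pCons a g)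
  then show ?case by (simp add: pcompose_pCons ev_add ev_mult ev_pCons)
qed

lemma lead_xm1:
  assumes "m \<ge> 1"
  shows "lead_coeff (monom 1 m - 1 :: int poly) = 1" and "degree (monom 1 m - 1 :: int poly) = m"
proof -
  have cm: "coeff (monom 1 m - 1 :: int poly) m = 1" using assms by (simp add: coeff_monom)
  have "degree (monom 1 m - 1 :: int poly) \<le> m"
    by (rule degree_le) (auto simp: coeff_monom)
  moreover have "degree (monom 1 m - 1 :: int poly) \<ge> m" using cm by (intro le_degree) simp
  ultimately show d: "degree (monom 1 m - 1 :: int poly) = m" by simp
  show "lead_coeff (monom 1 m - 1 :: int poly) = 1" using cm d by simp
qed

lemma prim_dvd_smult:
  fixes f Q q :: "int poly"
  assumes cf: "content f = 1" and c: "c \<noteq> 0" and eq: "smult c Q = f * q"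
  shows "f dvd Q"
proof -
  have "content (smult c Q) = content q" using eq cf by (simp add: content_mult)
  then have "\<bar>c\<bar> * content Q = content q" by simp
  then have "c dvd content q" by (metis abs_dvd_iff dvd_mult2 dvd_refl)
  then obtain t where t: "content q = c * t" by blast
  define r where "r = smult t (primitive_part q)"
  have "q = smult (content q) (primitive_part q)" by simp
  also have "\<dots> = smult c r" using t unfolding r_def by simp
  finally have qr: "q = smult c r" .
  have "smult c Q = smult c (f * r)" using eq unfolding qr by simp
  then have "Q = f * r" by (rule smult_cancel[OF c])
  then show ?thesis by simp
qed

lemma prime_step:
  fixes P :: "int poly" and \<eta> :: complex
  assumes m: "m \<ge> 1" and eta: "\<eta> ^ m = 1" and p: "prime p" and pm: "\<not> p dvd m"
    and P0: "ev P \<eta> = 0"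
  shows "ev P (\<eta> ^ p) = 0"
proof -
  define S where "S = {h. h \<noteq> 0 \<and> ev h \<eta> = 0}"
  define xm where "xm = (monom 1 m - 1 :: int poly)"
  have xm_lc: "lead_coeff xm = 1" unfolding xm_def using lead_xm1[OF m] by simp
  have xm_nz: "xm \<noteq> 0" using xm_lc by auto
  have xm_ev: "ev xm z = z ^ m - 1" for z unfolding xm_def by (simp add: ev_diff ev_monom one_pCons)
  have "xm \<in> S" unfolding S_def using xm_nz xm_ev[of \<eta>] eta by simp
  then obtain h where hS: "h \<in> S" and hmin: "\<And>h'. h' \<in> S \<Longrightarrow> degree h \<le> degree h'"
    using ex_has_least_nat[of "\<lambda>h. h \<in> S" xm degree] by blast
  define f where "f = primitive_part h"
  have h0: "h \<noteq> 0" and hev: "ev h \<eta> = 0" using hS unfolding S_def by auto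
  have ch: "content h \<noteq> 0" using h0 by simp
  have "ev h \<eta> = of_int (content h) * ev f \<eta>"
    unfolding f_def by (subst content_times_primitive_part[symmetric, of h]) (simp only: ev_smult)
  then have fev: "ev f \<eta> = 0" using hev ch by simp
  have f0: "f \<noteq> 0" using h0 unfolding f_def by simp
  have cf: "content f = 1" using h0 unfolding f_def by simp
  have degf: "degree f = degree h" unfolding f_def by simp
  have Mdvd: "f dvd Q" if Q0: "ev Q \<eta> = 0" for Q
  proof -
    obtain q r where qr: "pseudo_divmod Q f = (q, r)" by (cases "pseudo_divmod Q f") auto
    define c where "c = lead_coeff f ^ (Suc (degree Q) - degree f)"
    have eq: "smult c Q = f * q + r" unfolding c_def using pseudo_divmod(1)[OF f0 qr] .
    have rdeg: "r = 0 \<or> degree r < degree f" using pseudo_divmod(2)[OF f0 qr] .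
    have "ev (smult c Q) \<eta> = ev (f * q + r) \<eta>" using eq by simp
    then have rev: "ev r \<eta> = 0" using Q0 fev by (simp add: ev_smult ev_add ev_mult)
    have r0: "r = 0"
    proof (rule ccontr)
      assume "r \<noteq> 0"
      then have "r \<in> S" unfolding S_def using rev by simp
      then have "degree h \<le> degree r" by (rule hmin)
      then show False using rdeg \<open>r \<noteq> 0\<close> degf by simp
    qed
    have c0: "c \<noteq> 0" unfolding c_def using f0 by simp
    show "f dvd Q" using prim_dvd_smult[OF cf c0] eq r0 by simp
  qed
  obtain g where fg: "xm = f * g" using Mdvd[of xm] xm_ev[of \<eta>] eta by auto
  have "lead_coeff f * lead_coeff g = 1" using xm_lc fg by (simp add: lead_coeff_mult)
  then have lcf: "\<not> int p dvd lead_coeff f"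
    using p by (metis dvd_mult2 int_dvd_int_iff of_nat_1 prime_nat_iff prime_nat_int_transfer
        not_prime_unit)
  have degf1: "degree f \<ge> 1"
  proof (rule ccontr)
    assume "\<not> degree f \<ge> 1"
    then have "degree f = 0" by simp
    then obtain a where "f = [:a:]" by (metis degree_eq_zeroE)
    then show False using fev f0 by simp
  qed
  have feta: "ev f (\<eta> ^ p) = 0"
  proof (rule ccontr)
    assume fne: "ev f (\<eta> ^ p) \<noteq> 0"
    have "ev xm (\<eta> ^ p) = 0" using xm_ev eta by (simp add: power_mult[symmetric] mult.commute power_mult)
    then have "ev f (\<eta> ^ p) * ev g (\<eta> ^ p) = 0" using fg by (simp add: ev_mult)
    then have "ev g (\<eta> ^ p) = 0" using fne by simp
    then have "ev (g \<circ>\<^sub>p monom 1 p) \<eta> = 0" by (simp add: ev_pcompose ev_monom)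
    then obtain h' where h': "g \<circ>\<^sub>p monom 1 p = f * h'" using Mdvd by blast
    have c1: "cg p (g ^ p) (f * h')" using cg_sym[OF poly_frob[OF p, of g]] h' by simp
    define A where "A = monom 1 1 * pderiv g - smult (int m) g"
    define B where "B = monom 1 1 * pderiv f"
    have di: "[:int m:] = f * A + g * B" unfolding A_def B_def
      using deriv_ident[of f g m] fg m unfolding xm_def by simp
    obtain E0 where E0: "(f * A + g * B) ^ p = (f * A) * E0 + (g * B) ^ p" using pow_split by blast
    define E where "E = A * E0"
    have E: "(f * A + g * B) ^ p = f * E + (g * B) ^ p" using E0 unfolding E_def by (simp add: mult.assoc)
    have "cg p ((g * B) ^ p) (f * h' * B ^ p)"
      unfolding power_mult_distrib by (rule cg_mult[OF c1 cg_refl])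
    then have "cg p (f * E + (g * B) ^ p) (f * E + f * h' * B ^ p)" by (rule cg_add[OF cg_refl])
    then have "cg p ([:int m:] ^ p) (f * (E + h' * B ^ p))" using E di by (simp add: algebra_simps)
    then obtain D where Deq: "[:int m ^ p:] = f * (E + h' * B ^ p) + of_nat p * D"
      unfolding cg_def by (auto simp: poly_const_pow)
    have "\<not> int p dvd int m ^ p"
    proof
      assume "int p dvd int m ^ p"
      then have "int p dvd int m" using p by (metis of_nat_power int_dvd_int_iff prime_dvd_power)
      then show False using pm by simp
    qed
    then show False using no_unit_mod_p[OF p degf1 lcf _ Deq] by simp
  qed
  obtain q where "P = f * q" using Mdvd[OF P0] by blast
  then show ?thesis using feta by (simp add: ev_mult)
qed

lemma all_coprime:
  fixes P :: "int poly" and \<eta> :: complex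
  assumes m: "m \<ge> 1" and eta: "\<eta> ^ m = 1" and P0: "ev P \<eta> = 0"
  shows "c > 0 \<Longrightarrow> coprime c m \<Longrightarrow> ev P (\<eta> ^ c) = 0"
proof (induction c rule: less_induct)
  case (less c)
  show ?case
  proof (cases "c = 1")
    case True then show ?thesis using P0 by simp
  next
    case False
    then obtain p where p: "prime p" "p dvd c" using prime_factor_nat by blast
    then obtain c' where c': "c = p * c'" by (auto elim: dvdE)
    have c'0: "c' > 0" using less.prems c' by (cases c') auto
    have p1: "p > 1" using p prime_gt_1_nat by blast
    have "c' < c" using c' c'0 p1 by simp
    moreover have cc': "coprime c' m" using less.prems(2) c' by simp
    ultimately have IH: "ev P (\<eta> ^ c') = 0" using less.IH c'0 by blast
    have pm: "\<not> p dvd m"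
    proof
      assume "p dvd m"
      then have "p dvd gcd c m" using p by simp
      then have "p dvd 1" using less.prems(2) by simp
      then show False using p1 by simp
    qed
    have "(\<eta> ^ c') ^ m = (\<eta> ^ m) ^ c'" by (simp only: power_mult[symmetric] mult.commute)
    then have e1: "(\<eta> ^ c') ^ m = 1" using eta by simp
    have "ev P ((\<eta> ^ c') ^ p) = 0" by (rule prime_step[OF m e1 p(1) pm IH])
    moreover have "(\<eta> ^ c') ^ p = \<eta> ^ c" unfolding c' by (simp only: power_mult[symmetric] mult.commute)
    ultimately show ?thesis by simp
  qed
qed

lemma gal:
  fixes P :: "int poly" and \<zeta> :: complex
  assumes m: "m \<ge> 1" and z: "\<zeta> ^ m = 1" and a: "coprime a m" and b: "coprime b m"
    and P0: "ev P (\<zeta> ^ a) = 0"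
  shows "ev P (\<zeta> ^ b) = 0"
proof (cases "m = 1")
  case True
  then have "\<zeta> = 1" using z by simp
  then show ?thesis using P0 by simp
next
  case False
  then have m2: "m \<ge> 2" using m by simp
  have a0: "a \<noteq> 0" proof
    assume "a = 0"
    then have "m = 1" using a by simp
    then show False using m2 by simp
  qed
  obtain x y where xy: "a * x = m * y + gcd a m" using bezout_nat[OF a0] by blast
  then have xy1: "a * x = m * y + 1" using a by simp
  have cx: "coprime x m"
  proof (rule coprimeI)
    fix d assume "d dvd x" "d dvd m"
    then have "d dvd a * x" "d dvd m * y" by auto
    then have "d dvd 1" using xy1 by (metis dvd_add_right_iff)
    then show "is_unit d" by simp
  qed
  define c where "c = x * b + m"
  have c0: "c > 0" unfolding c_def using m by simp
  have cxb: "coprime (x * b) m" using cx b by simp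
  have cc: "coprime c m" unfolding c_def
  proof (rule coprimeI)
    fix d assume d: "d dvd x * b + m" "d dvd m"
    then have "d dvd x * b" by (metis dvd_add_left_iff)
    then show "is_unit d" using coprime_common_divisor[OF cxb _ d(2)] by blast
  qed
  have "a * c = (a * x) * b + a * m" unfolding c_def by (simp add: algebra_simps)
  also have "\<dots> = b + m * (y * b + a)" unfolding xy1 by (simp add: algebra_simps)
  finally have ac: "a * c = b + m * (y * b + a)" .
  have "(\<zeta> ^ a) ^ c = \<zeta> ^ (a * c)" by (simp only: power_mult)
  also have "\<dots> = \<zeta> ^ b * (\<zeta> ^ m) ^ (y * b + a)" unfolding ac by (simp only: power_add power_mult)
  finally have "(\<zeta> ^ a) ^ c = \<zeta> ^ b" using z by simp
  moreover have "(\<zeta> ^ a) ^ m = 1"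
  proof -
    have "(\<zeta> ^ a) ^ m = (\<zeta> ^ m) ^ a" by (simp only: power_mult[symmetric] mult.commute)
    then show ?thesis using z by simp
  qed
  ultimately show ?thesis using all_coprime[OF m _ P0 c0 cc] by simp
qed

definition w :: "nat \<Rightarrow> nat \<Rightarrow> complex" where
  "w k n = cis (2 * pi * real n / real k)"

lemma dft_w: "dft k x j = (\<Sum>l<k. of_int (x l) * w k (j * l))"
  unfolding dft_def w_def cis_conv_exp
  by (intro sum.cong refl arg_cong2[where f="(*)"] arg_cong[where f=exp]) (simp add: field_simps)

lemma w_add: "w k (a + b) = w k a * w k b"
  unfolding w_def by (simp add: cis_mult add_divide_distrib distrib_left)

lemma w_kq: assumes "k \<ge> 1" shows "w k (k * q) = 1"
proof -
  have "2 * pi * real (k * q) / real k = 2 * pi * real q" using assms by simp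
  then show ?thesis unfolding w_def by (simp add: cis_multiple_2pi)
qed

lemma w_mod: assumes "k \<ge> 1" shows "w k n = w k (n mod k)"
proof -
  have "n = n mod k + k * (n div k)" by simp
  then have "w k n = w k (n mod k) * w k (k * (n div k))" by (metis w_add)
  then show ?thesis using w_kq[OF assms] by simp
qed

lemma w_cnj: "w k n * cnj (w k n) = 1"
  unfolding w_def by (simp add: cis_cnj cis_mult)

lemma cyc_alt: assumes "k \<ge> 1"
  shows "cyc_stat2 k x d 0 = (\<Sum>t<k. x ((d + t) mod k) * x t)"
proof -
  define F where "F t = x ((d + t) mod k) * x t" for t
  have "cyc_stat2 k x d 0 = (\<Sum>t=1..k. F (t mod k))"
    unfolding cyc_stat2_def F_def by (intro sum.cong refl) (simp add: mod_add_right_eq)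
  also have "{1..k} = insert k {1..<k}" using assms by auto
  also have "(\<Sum>t\<in>insert k {1..<k}. F (t mod k)) = F 0 + (\<Sum>t\<in>{1..<k}. F t)"
    by (subst sum.insert) (auto intro!: sum.cong)
  also have "{..<k} = insert 0 {1..<k}" using assms by auto
  then have "(\<Sum>t<k. F t) = F 0 + (\<Sum>t\<in>{1..<k}. F t)" by simp
  finally show ?thesis unfolding F_def by simp
qed

lemma shift_sum:
  fixes k t :: nat
  assumes k: "k \<ge> 1" and t: "t < k"
  shows "(\<Sum>d<k. G ((d + t) mod k)) = (\<Sum>l<k. (G l :: complex))"
proof (rule sum.reindex_bij_witness[where i="\<lambda>l. (l + (k - t)) mod k" and j="\<lambda>d. (d + t) mod k"])
  fix d assume d: "d \<in> {..<k}"
  have "((d + t) mod k + (k - t)) mod k = (d + t + (k - t)) mod k" by (simp add: mod_add_left_eq)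
  also have "d + t + (k - t) = d + k" using t by simp
  finally show "((d + t) mod k + (k - t)) mod k = d" using d by simp
  show "(d + t) mod k \<in> {..<k}" using k by simp
next
  fix l assume l: "l \<in> {..<k}"
  have "((l + (k - t)) mod k + t) mod k = (l + (k - t) + t) mod k" by (simp add: mod_add_left_eq)
  also have "l + (k - t) + t = l + k" using t by simp
  finally show "((l + (k - t)) mod k + t) mod k = l" using l by simp
  show "(l + (k - t)) mod k \<in> {..<k}" using k by simp
qed simp

lemma dft_sq:
  assumes k: "k \<ge> 1"
  shows "dft k x j * cnj (dft k x j) = (\<Sum>d<k. of_int (cyc_stat2 k x d 0) * w k (j * d))"
proof -
  have "(\<Sum>d<k. of_int (cyc_stat2 k x d 0) * w k (j * d))
      = (\<Sum>d<k. \<Sum>t<k. of_int (x ((d + t) mod k)) * of_int (x t) * w k (j * d))"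
    unfolding cyc_alt[OF k] by (simp add: sum_distrib_right)
  also have "\<dots> = (\<Sum>t<k. \<Sum>d<k. of_int (x ((d + t) mod k)) * of_int (x t) * w k (j * d))"
    by (rule sum.swap)
  also have "\<dots> = (\<Sum>t<k. of_int (x t) * cnj (w k (j * t)) * dft k x j)"
  proof (rule sum.cong[OF refl])
    fix t assume t: "t \<in> {..<k}"
    have key: "w k (j * d) = w k (j * ((d + t) mod k)) * cnj (w k (j * t))" for d
    proof -
      have "w k (j * ((d + t) mod k)) = w k (j * (d + t))"
        using w_mod[OF k, of "j * ((d + t) mod k)"] w_mod[OF k, of "j * (d + t)"]
        by (simp add: mod_mult_right_eq)
      also have "\<dots> = w k (j * d) * w k (j * t)" by (simp add: distrib_left w_add)
      finally have "w k (j * ((d + t) mod k)) * cnj (w k (j * t)) = w k (j * d) * (w k (j * t) * cnj (w k (j * t)))"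
        by (simp add: mult.assoc)
      then show ?thesis using w_cnj by simp
    qed
    have "(\<Sum>d<k. of_int (x ((d + t) mod k)) * of_int (x t) * w k (j * d))
        = (\<Sum>d<k. (of_int (x t) * cnj (w k (j * t))) * (of_int (x ((d + t) mod k)) * w k (j * ((d + t) mod k))))"
    proof (rule sum.cong[OF refl])
      fix d assume "d \<in> {..<k}"
      have kd: "w k (j * d) = w k (j * ((d + t) mod k)) * cnj (w k (j * t))" by (rule key)
      show "of_int (x ((d + t) mod k)) * of_int (x t) * w k (j * d) =
          (of_int (x t) * cnj (w k (j * t))) * (of_int (x ((d + t) mod k)) * w k (j * ((d + t) mod k)))"
        unfolding kd by (simp only: mult_ac)
    qed
    also have "\<dots> = (of_int (x t) * cnj (w k (j * t))) * (\<Sum>d<k. of_int (x ((d + t) mod k)) * w k (j * ((d + t) mod k)))"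
      by (simp add: sum_distrib_left)
    also have "(\<Sum>d<k. of_int (x ((d + t) mod k)) * w k (j * ((d + t) mod k))) = (\<Sum>l<k. of_int (x l) * w k (j * l))"
      using shift_sum[OF k, of t "\<lambda>l. of_int (x l) * w k (j * l)"] t by simp
    finally show "(\<Sum>d<k. of_int (x ((d + t) mod k)) * of_int (x t) * w k (j * d)) = of_int (x t) * cnj (w k (j * t)) * dft k x j"
      by (simp add: dft_w)
  qed
  also have "\<dots> = cnj (dft k x j) * dft k x j"
    by (simp add: dft_w sum_distrib_right)
  finally show ?thesis by (simp add: mult.commute)
qed

lemma dft_zero_iff:
  assumes k: "k \<ge> 1" and S: "\<forall>i1 i2. cyc_stat2 k x i1 i2 = cyc_stat2 k y i1 i2"
  shows "dft k x j = 0 \<longleftrightarrow> dft k y j = 0"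
proof -
  have "dft k x j * cnj (dft k x j) = dft k y j * cnj (dft k y j)"
    unfolding dft_sq[OF k] using S by simp
  then show ?thesis by (metis complex_cnj_zero_iff mult_eq_0_iff)
qed

lemma ev_sum: "finite A \<Longrightarrow> ev (\<Sum>i\<in>A. f i) z = (\<Sum>i\<in>A. ev (f i) z)"
  by (induction A rule: finite_induct) (simp_all add: ev_add)

definition Px :: "nat \<Rightarrow> (nat \<Rightarrow> int) \<Rightarrow> int poly" where
  "Px k x = (\<Sum>l<k. monom (x l) l)"

lemma dft_ev:
  assumes km: "k = \<alpha> * m" and a1: "\<alpha> \<ge> 1" and m1: "m \<ge> 1"
  shows "dft k x (\<alpha> * a) = ev (Px k x) (cis (2 * pi / real m) ^ a)"
proof -
  have "ev (Px k x) (cis (2 * pi / real m) ^ a) = (\<Sum>l<k. of_int (x l) * (cis (2 * pi / real m) ^ a) ^ l)"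
    unfolding Px_def by (simp add: ev_sum ev_monom)
  also have "\<dots> = (\<Sum>l<k. of_int (x l) * w k (\<alpha> * a * l))"
  proof (intro sum.cong refl arg_cong2[where f="(*)"])
    fix l
    have "(cis (2 * pi / real m) ^ a) ^ l = cis (2 * pi / real m) ^ (a * l)"
      by (rule power_mult[symmetric])
    also have "\<dots> = cis (real (a * l) * (2 * pi / real m))"
      by (rule Complex.DeMoivre)
    also have "real (a * l) * (2 * pi / real m) = 2 * pi * real (\<alpha> * a * l) / real k"
      using a1 m1 km by (simp add: field_simps)
    finally show "(cis (2 * pi / real m) ^ a) ^ l = w k (\<alpha> * a * l)" unfolding w_def .
  qed
  finally show ?thesis by (simp add: dft_w)
qed

lemma G_same:
  fixes x :: "nat \<Rightarrow> int"
  assumes k: "k \<ge> 1" and j1: "j1 \<in> G_set k \<alpha>" and j2: "j2 \<in> G_set k \<alpha>"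
    and z: "dft k x j1 = 0"
  shows "dft k x j2 = 0"
proof -
  have g1: "gcd j1 k = \<alpha>" and j1r: "j1 \<in> {1..k}" using j1 unfolding G_set_def by auto
  have g2: "gcd j2 k = \<alpha>" using j2 unfolding G_set_def by auto
  have a0: "\<alpha> \<noteq> 0" using g1 j1r by auto
  then have a1: "\<alpha> \<ge> 1" by simp
  have "\<alpha> dvd k" using g1 by (metis gcd_dvd2)
  then obtain m where km: "k = \<alpha> * m" by blast
  have m1: "m \<ge> 1" using km k by (cases m) auto
  have "\<alpha> dvd j1" using g1 by (metis gcd_dvd1)
  then obtain a where a: "j1 = \<alpha> * a" by blast
  have "\<alpha> dvd j2" using g2 by (metis gcd_dvd1)
  then obtain b where b: "j2 = \<alpha> * b" by blast
  have "\<alpha> * gcd a m = \<alpha> * 1" using g1 unfolding a km by (simp add: gcd_mult_distrib_nat)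
  then have ca: "coprime a m" using a0 by (simp add: coprime_iff_gcd_eq_1)
  have "\<alpha> * gcd b m = \<alpha> * 1" using g2 unfolding b km by (simp add: gcd_mult_distrib_nat)
  then have cb: "coprime b m" using a0 by (simp add: coprime_iff_gcd_eq_1)
  define \<zeta> where "\<zeta> = cis (2 * pi / real m)"
  have zm: "\<zeta> ^ m = 1"
  proof -
    have "\<zeta> ^ m = cis (real m * (2 * pi / real m))" unfolding \<zeta>_def by (rule Complex.DeMoivre)
    also have "real m * (2 * pi / real m) = 2 * pi * 1" using m1 by simp
    also have "cis (2 * pi * 1) = 1" by (rule cis_multiple_2pi) simp
    finally show ?thesis .
  qed
  have "ev (Px k x) (\<zeta> ^ a) = 0" using z dft_ev[OF km a1 m1, of x a] unfolding a \<zeta>_def by simp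
  then have "ev (Px k x) (\<zeta> ^ b) = 0" by (rule gal[OF m1 zm ca cb])
  then show ?thesis using dft_ev[OF km a1 m1, of x b] unfolding b \<zeta>_def by simp
qed

theorem lemma3p5:
  fixes k :: nat and x y :: "nat \<Rightarrow> int"
  assumes "k \<ge> 1"
    and "\<forall>i1 i2. cyc_stat2 k x i1 i2 = cyc_stat2 k y i1 i2"
    and "\<alpha> \<in> {1..k}"
  shows "(\<forall>j\<in>G_set k \<alpha>. dft k x j \<noteq> 0 \<and> dft k y j \<noteq> 0)
       \<or> (\<forall>j\<in>G_set k \<alpha>. dft k x j = 0 \<and> dft k y j = 0)"
proof (cases "\<exists>j\<in>G_set k \<alpha>. dft k x j = 0")
  case True
  then obtain j0 where j0: "j0 \<in> G_set k \<alpha>" "dft k x j0 = 0" by blast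
  have "\<forall>j\<in>G_set k \<alpha>. dft k x j = 0 \<and> dft k y j = 0"
  proof
    fix j assume j: "j \<in> G_set k \<alpha>"
    have "dft k x j = 0" using G_same[OF assms(1) j0(1) j j0(2)] .
    moreover then have "dft k y j = 0" using dft_zero_iff[OF assms(1,2)] by blast
    ultimately show "dft k x j = 0 \<and> dft k y j = 0" by simp
  qed
  then show ?thesis by blast
next
  case False
  then have "\<forall>j\<in>G_set k \<alpha>. dft k x j \<noteq> 0 \<and> dft k y j \<noteq> 0"
    using dft_zero_iff[OF assms(1,2)] by blast
  then show ?thesis by blast
qed

end
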